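(* Let $\Gamma$ be a finite connected $4$-valent graph of girth at least $5$ and let $g$ be an automorphism of $\Gamma$. Then $$2|F(\Gamma,g)|+4|V_1(\Gamma,g)|+3|V_2(\Gamma,g)|+|V_4(\Gamma,g)|\le|V\Gamma|.$$
   Context: For an automorphism $g$ of a $4$-valent graph $\Gamma$: $A(\Gamma,g)$ is the set of edges $\{a,b\}$ with $a^g=a$ and $b^g=b$; $F(\Gamma,g)$ is the set of edges $\{a,b\}$ with $a^g=b$ and $b^g=a$, $a\neq b$. $\Gamma[g]$ is the subgraph with edge set $A(\Gamma,g)$ and vertex set the vertices incident to edges of $A(\Gamma,g)$; its vertices have valency $1$, $2$ or $4$ in $\Gamma[g]$, and $V_i(\Gamma,g)$ is the set of vertices of $\Gamma[g]$ of valency $i$ in $\Gamma[g]$, for $i\in\{1,2,4\}$. *)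

theory Defs
  imports Main
begin

definition simple_graph :: "'a set \<Rightarrow> 'a set set \<Rightarrow> bool" where
  "simple_graph V E \<longleftrightarrow> (\<forall>e\<in>E. \<exists>a b. e = {a, b} \<and> a \<noteq> b \<and> a \<in> V \<and> b \<in> V)"

definition degree :: "'a set set \<Rightarrow> 'a \<Rightarrow> nat" where
  "degree E v = card {e\<in>E. v \<in> e}"

definition regular_of :: "nat \<Rightarrow> 'a set \<Rightarrow> 'a set set \<Rightarrow> bool" where
  "regular_of k V E \<longleftrightarrow> (\<forall>v\<in>V. degree E v = k)"

definition adj_rel :: "'a set set \<Rightarrow> ('a \<times> 'a) set" where
  "adj_rel E = {(u, v). {u, v} \<in> E}"

definition connected_graph :: "'a set \<Rightarrow> 'a set set \<Rightarrow> bool" where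
  "connected_graph V E \<longleftrightarrow> (\<forall>u\<in>V. \<forall>v\<in>V. (u, v) \<in> (adj_rel E)\<^sup>*)"

definition is_cycle :: "'a set set \<Rightarrow> 'a list \<Rightarrow> bool" where
  "is_cycle E cs \<longleftrightarrow> length cs \<ge> 3 \<and> distinct cs \<and>
     (\<forall>i < length cs. {cs ! i, cs ! ((i + 1) mod length cs)} \<in> E)"

definition girth_at_least :: "nat \<Rightarrow> 'a set set \<Rightarrow> bool" where
  "girth_at_least k E \<longleftrightarrow> (\<forall>cs. is_cycle E cs \<longrightarrow> length cs \<ge> k)"

definition graph_automorphism :: "'a set \<Rightarrow> 'a set set \<Rightarrow> ('a \<Rightarrow> 'a) \<Rightarrow> bool" where
  "graph_automorphism V E g \<longleftrightarrow> bij_betw g V V \<and>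
     (\<forall>a\<in>V. \<forall>b\<in>V. {a, b} \<in> E \<longleftrightarrow> {g a, g b} \<in> E)"

definition fixed_edges :: "'a set set \<Rightarrow> ('a \<Rightarrow> 'a) \<Rightarrow> 'a set set" where
  "fixed_edges E g = {e\<in>E. \<exists>a b. e = {a, b} \<and> g a = a \<and> g b = b}"

definition flipped_edges :: "'a set set \<Rightarrow> ('a \<Rightarrow> 'a) \<Rightarrow> 'a set set" where
  "flipped_edges E g = {e\<in>E. \<exists>a b. e = {a, b} \<and> a \<noteq> b \<and> g a = b \<and> g b = a}"

definition fixed_subgraph_vertices :: "nat \<Rightarrow> 'a set set \<Rightarrow> ('a \<Rightarrow> 'a) \<Rightarrow> 'a set" where
  "fixed_subgraph_vertices i E g =
     {v \<in> \<Union>(fixed_edges E g). card {e \<in> fixed_edges E g. v \<in> e} = i}"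

end

theory Submission imports Defs begin
lemma tri: assumes "girth_at_least 5 E" "{a,b}\<in>E" "{b,c}\<in>E" "{c,a}\<in>E" "distinct [a,b,c]" shows False
proof -
  have "\<forall>i<length [a,b,c]. {[a,b,c] ! i, [a,b,c] ! ((i + 1) mod length [a,b,c])} \<in> E"
  proof (intro allI impI)
    fix i assume "i < length [a,b,c]"
    hence "i = 0 \<or> i = 1 \<or> i = 2" by auto
    thus "{[a,b,c] ! i, [a,b,c] ! ((i + 1) mod length [a,b,c])} \<in> E" using assms by auto
  qed
  hence "is_cycle E [a,b,c]" using assms unfolding is_cycle_def by simp
  then show False using assms(1) unfolding girth_at_least_def by fastforce
qed
lemma quad: assumes "girth_at_least 5 E" "{a,b}\<in>E" "{b,c}\<in>E" "{c,d}\<in>E" "{d,a}\<in>E" "distinct [a,b,c,d]" shows False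
proof -
  have "\<forall>i<length [a,b,c,d]. {[a,b,c,d] ! i, [a,b,c,d] ! ((i + 1) mod length [a,b,c,d])} \<in> E"
  proof (intro allI impI)
    fix i assume "i < length [a,b,c,d]"
    hence "i = 0 \<or> i = 1 \<or> i = 2 \<or> i = 3" by auto
    thus "{[a,b,c,d] ! i, [a,b,c,d] ! ((i + 1) mod length [a,b,c,d])} \<in> E" using assms by auto
  qed
  hence "is_cycle E [a,b,c,d]" using assms unfolding is_cycle_def by simp
  then show False using assms(1) unfolding girth_at_least_def by fastforce
qed
lemma sg_edge: assumes "simple_graph V E" "{a,b}\<in>E" shows "a\<in>V \<and> b\<in>V \<and> a\<noteq>b"
proof -
  obtain x y where "{a,b} = {x,y}" "x\<noteq>y" "x\<in>V" "y\<in>V" using assms unfolding simple_graph_def by blast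
  thus ?thesis by (auto simp: doubleton_eq_iff)
qed

lemma flip_eq: assumes "e \<in> flipped_edges E g" "x \<in> e" shows "e = {x, g x} \<and> g x \<noteq> x \<and> e \<in> E"
  using assms unfolding flipped_edges_def by auto

lemma nbr_card: assumes "simple_graph V E" "regular_of 4 V E" "v \<in> V"
  shows "card {w. {v,w}\<in>E} = 4"
proof -
  have "bij_betw (\<lambda>w. {v,w}) {w. {v,w}\<in>E} {e\<in>E. v\<in>e}"
  proof (rule bij_betwI')
    show "\<And>x y. x \<in> {w. {v, w} \<in> E} \<Longrightarrow> y \<in> {w. {v, w} \<in> E} \<Longrightarrow> ({v, x} = {v, y}) = (x = y)"
      by (metis doubleton_eq_iff)
    show "\<And>x. x \<in> {w. {v, w} \<in> E} \<Longrightarrow> {v, x} \<in> {e \<in> E. v \<in> e}" by auto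
    fix e assume "e \<in> {e \<in> E. v \<in> e}"
    hence eE: "e\<in>E" and "v\<in>e" by auto
    obtain a b where "e = {a,b}" using assms(1) eE unfolding simple_graph_def by meson
    show "\<exists>x\<in>{w. {v, w} \<in> E}. e = {v, x}"
    proof (cases "v = a")
      case True hence "e = {v,b}" using \<open>e = {a,b}\<close> by simp
      thus ?thesis using eE by blast
    next
      case False hence "v = b" using \<open>e = {a,b}\<close> \<open>v\<in>e\<close> by blast
      hence "e = {v,a}" using \<open>e = {a,b}\<close> by (simp add: insert_commute)
      thus ?thesis using eE by blast
    qed
  qed
  hence "card {w. {v,w}\<in>E} = card {e\<in>E. v\<in>e}" by (rule bij_betw_same_card)
  thus ?thesis using assms(2,3) unfolding regular_of_def degree_def by simp
qed

lemma fixnbr_card: assumes "g v = v"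
  shows "card {w. {v,w}\<in>E \<and> g w = w} = card {e \<in> fixed_edges E g. v \<in> e}"
proof -
  have "bij_betw (\<lambda>w. {v,w}) {w. {v,w}\<in>E \<and> g w = w} {e \<in> fixed_edges E g. v \<in> e}"
  proof (rule bij_betwI')
    show "\<And>x y. x \<in> {w. {v,w}\<in>E \<and> g w = w} \<Longrightarrow> y \<in> {w. {v,w}\<in>E \<and> g w = w} \<Longrightarrow> ({v, x} = {v, y}) = (x = y)"
      by (metis doubleton_eq_iff)
    show "\<And>x. x \<in> {w. {v,w}\<in>E \<and> g w = w} \<Longrightarrow> {v, x} \<in> {e \<in> fixed_edges E g. v \<in> e}"
      using assms unfolding fixed_edges_def by auto
    fix e assume "e \<in> {e \<in> fixed_edges E g. v \<in> e}"
    hence eE: "e\<in>E" and "v\<in>e" and ex: "\<exists>a b. e = {a, b} \<and> g a = a \<and> g b = b" unfolding fixed_edges_def by auto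
    obtain a b where "e = {a,b}" "g a = a" "g b = b" using ex by blast
    show "\<exists>x\<in>{w. {v,w}\<in>E \<and> g w = w}. e = {v, x}"
    proof (cases "v = a")
      case True hence "e = {v,b}" using \<open>e = {a,b}\<close> by simp
      thus ?thesis using eE \<open>g b = b\<close> by blast
    next
      case False hence "v = b" using \<open>e = {a,b}\<close> \<open>v\<in>e\<close> by blast
      hence "e = {v,a}" using \<open>e = {a,b}\<close> by (simp add: insert_commute)
      thus ?thesis using eE \<open>g a = a\<close> by blast
    qed
  qed
  thus ?thesis by (rule bij_betw_same_card)
qed

theorem lemma4p3:
  fixes V :: "'a set" and E :: "'a set set" and g :: "'a \<Rightarrow> 'a"
  assumes "finite V"
    and "simple_graph V E"
    and "connected_graph V E"
    and "regular_of 4 V E"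
    and "girth_at_least 5 E"
    and "graph_automorphism V E g"
  shows "2 * card (flipped_edges E g) + 4 * card (fixed_subgraph_vertices 1 E g)
           + 3 * card (fixed_subgraph_vertices 2 E g) + card (fixed_subgraph_vertices 4 E g)
         \<le> card V"
proof -
  note sg = sg_edge[OF assms(2)]
  have aut: "{g a, g b} \<in> E" if "{a,b}\<in>E" for a b
    using assms(6) sg[OF that] that unfolding graph_automorphism_def by blast
  have ginj: "inj_on g V" using assms(6) unfolding graph_automorphism_def bij_betw_def by blast
  have gV: "g x \<in> V" if "x \<in> V" for x using assms(6) that unfolding graph_automorphism_def bij_betw_def by blast
  define Fl where "Fl = flipped_edges E g"
  define V1 where "V1 = fixed_subgraph_vertices 1 E g"
  define V2 where "V2 = fixed_subgraph_vertices 2 E g"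
  define V4 where "V4 = fixed_subgraph_vertices 4 E g"
  define W where "W = V1 \<union> V2 \<union> V4"
  define NF where "NF v = {w. {v,w}\<in>E \<and> g w \<noteq> w}" for v
  define T where "T v = insert v (NF v)" for v
  have fixV: "v \<in> V \<and> g v = v" if "v \<in> fixed_subgraph_vertices i E g" for v i
    using that sg unfolding fixed_subgraph_vertices_def fixed_edges_def by blast
  have Tcard: "card (T v) = 5 - i" if "v \<in> fixed_subgraph_vertices i E g" "i \<le> 4" for v i
  proof -
    have v: "v \<in> V" "g v = v" using fixV[OF that(1)] by auto
    have i: "card {e \<in> fixed_edges E g. v \<in> e} = i" using that(1) unfolding fixed_subgraph_vertices_def by auto
    have sub: "{w. {v,w}\<in>E \<and> g w = w} \<subseteq> {w. {v,w}\<in>E}" by auto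
    have fin: "finite {w. {v,w}\<in>E}" by (rule finite_subset[OF _ assms(1)]) (use sg in auto)
    have "NF v = {w. {v,w}\<in>E} - {w. {v,w}\<in>E \<and> g w = w}" unfolding NF_def by auto
    hence "card (NF v) = 4 - i" using card_Diff_subset[OF finite_subset[OF sub fin] sub]
      nbr_card[OF assms(2,4) v(1)] fixnbr_card[of g v E] v i by simp
    moreover have "v \<notin> NF v" "finite (NF v)" using v fin unfolding NF_def by (auto intro: finite_subset)
    ultimately show ?thesis unfolding T_def using that(2) by simp
  qed
  have finW: "finite W"
    by (rule finite_subset[OF _ assms(1)]) (use fixV in \<open>auto simp: W_def V1_def V2_def V4_def\<close>)
  have disjV: "fixed_subgraph_vertices i E g \<inter> fixed_subgraph_vertices j E g = {}" if "i \<noteq> j" for i j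
    using that unfolding fixed_subgraph_vertices_def by auto
  have sumW: "(\<Sum>v\<in>W. card (T v)) = 4 * card V1 + 3 * card V2 + card V4"
  proof -
    have f: "finite V1" "finite V2" "finite V4" using finW unfolding W_def by auto
    have "(\<Sum>v\<in>W. card (T v)) = (\<Sum>v\<in>V1. card (T v)) + (\<Sum>v\<in>V2. card (T v)) + (\<Sum>v\<in>V4. card (T v))"
      unfolding W_def using f disjV[of 1 2] disjV[of 1 4] disjV[of 2 4]
      by (simp add: sum.union_disjoint Int_Un_distrib2 V1_def V2_def V4_def)
    also have "\<dots> = (\<Sum>v\<in>V1. 4) + (\<Sum>v\<in>V2. 3) + (\<Sum>v\<in>V4. 1)"
      using Tcard[of _ 1] Tcard[of _ 2] Tcard[of _ 4] unfolding V1_def V2_def V4_def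
      by (intro arg_cong2[where f="(+)"] sum.cong) auto
    finally show ?thesis by simp
  qed
  have Wfix: "v \<in> V \<and> g v = v" if "v \<in> W" for v using that fixV unfolding W_def V1_def V2_def V4_def by blast
  have TV: "T v \<subseteq> V" if "v \<in> W" for v using Wfix[OF that] sg unfolding T_def NF_def by auto
  have disjT: "T v \<inter> T u = {}" if "v \<in> W" "u \<in> W" "v \<noteq> u" for v u
  proof (rule ccontr)
    assume "T v \<inter> T u \<noteq> {}"
    then obtain w where w: "w \<in> T v" "w \<in> T u" by blast
    have v: "v\<in>V" "g v = v" and u: "u \<in> V" "g u = u" using Wfix that by auto
    have "w \<in> NF v" using w v u that unfolding T_def NF_def by auto
    moreover have "w \<in> NF u" using w v u that unfolding T_def NF_def by auto
    ultimately have e1: "{v,w}\<in>E" "{u,w}\<in>E" "g w \<noteq> w" unfolding NF_def by auto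
    have e2: "{v, g w}\<in>E" "{u, g w} \<in> E" using aut[OF e1(1)] aut[OF e1(2)] v u by auto
    have "w \<in> V" using sg[OF e1(1)] by auto
    have "g w \<noteq> v" using ginj v \<open>w\<in>V\<close> e1(3) by (metis inj_on_def)
    moreover have "g w \<noteq> u" using ginj u \<open>w\<in>V\<close> e1(3) by (metis inj_on_def)
    moreover have "w \<noteq> v" "w \<noteq> u" using e1 v u by auto
    ultimately have "distinct [v, w, u, g w]" using that e1 by auto
    moreover have "{w,u}\<in>E" "{g w, v}\<in>E" using e1 e2 by (auto simp: insert_commute)
    ultimately show False using quad[OF assms(5) e1(1) _ e2(2)] by blast
  qed
  have EPow: "E \<subseteq> Pow V"
    proof
      fix e assume "e \<in> E"
      then obtain a b where "e = {a,b}" "a \<in> V" "b \<in> V" using assms(2) unfolding simple_graph_def by meson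
      thus "e \<in> Pow V" by simp
    qed
  have finE: "finite E" using finite_subset[OF EPow] assms(1) by simp
  have FlE: "Fl \<subseteq> E" unfolding Fl_def flipped_edges_def by (rule Collect_restrict)
  have finFl: "finite Fl" using finite_subset[OF FlE finE] .
  have cardFl: "\<Union>Fl \<subseteq> V \<and> card (\<Union>Fl) = 2 * card Fl"
  proof
    show "\<Union>Fl \<subseteq> V"
    proof
      fix x assume "x \<in> \<Union>Fl"
      then obtain e where "e \<in> Fl" "x \<in> e" by blast
      hence "{x, g x} \<in> E" using flip_eq[of e E g x] unfolding Fl_def by metis
      thus "x \<in> V" using sg by blast
    qed
    have "card (\<Union>Fl) = (\<Sum>e\<in>Fl. card e)"
    proof (rule card_Union_disjoint)
      show "pairwise disjnt Fl" unfolding pairwise_def disjnt_def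
      proof (intro ballI impI)
        fix e1 e2 assume "e1 \<in> Fl" "e2 \<in> Fl" "e1 \<noteq> e2"
        show "e1 \<inter> e2 = {}"
        proof (rule ccontr)
          assume "e1 \<inter> e2 \<noteq> {}"
          then obtain x where "x \<in> e1" "x \<in> e2" by blast
          hence "e1 = {x, g x}" "e2 = {x, g x}"
            using flip_eq[of e1 E g x] flip_eq[of e2 E g x] \<open>e1 \<in> Fl\<close> \<open>e2 \<in> Fl\<close> unfolding Fl_def by auto
          thus False using \<open>e1 \<noteq> e2\<close> by simp
        qed
      qed
      show "\<And>A. A \<in> Fl \<Longrightarrow> finite A"
        using FlE EPow assms(1) by (meson PowD finite_subset subsetD)
    qed
    also have "\<dots> = (\<Sum>e\<in>Fl. 2)"
    proof (rule sum.cong)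
      fix e assume "e \<in> Fl"
      hence "\<exists>a b. e = {a, b} \<and> a \<noteq> b \<and> g a = b \<and> g b = a" unfolding Fl_def flipped_edges_def by simp
      then obtain a b where "e = {a,b}" "a \<noteq> b" by blast
      thus "card e = 2" by simp
    qed simp
    finally show "card (\<Union>Fl) = 2 * card Fl" by simp
  qed
  have cardU: "card (\<Union>v\<in>W. T v) = (\<Sum>v\<in>W. card (T v))"
  proof (rule card_UN_disjoint[OF finW])
    show "\<forall>v\<in>W. finite (T v)" using TV assms(1) finite_subset by blast
    show "\<forall>v\<in>W. \<forall>u\<in>W. v \<noteq> u \<longrightarrow> T v \<inter> T u = {}" using disjT by blast
  qed
  have disjFT: "\<Union>Fl \<inter> (\<Union>v\<in>W. T v) = {}"
  proof (rule ccontr)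
    assume "\<Union>Fl \<inter> (\<Union>v\<in>W. T v) \<noteq> {}"
    then obtain x where x1: "x \<in> \<Union>Fl" and x2: "x \<in> (\<Union>v\<in>W. T v)" by blast
    from x1 obtain e where ex12: "e \<in> Fl" "x \<in> e" by blast
    from x2 obtain v where ex34: "v \<in> W" "x \<in> T v" by blast
    note ex = ex12 ex34
    have f: "e = {x, g x}" "g x \<noteq> x" "e \<in> E" using flip_eq[of e E g x] ex12 unfolding Fl_def by auto
    have v: "v \<in> V" "g v = v" using Wfix ex by auto
    have "x \<noteq> v" using f v by auto
    hence "{v,x} \<in> E" using ex unfolding T_def NF_def by auto
    hence "{g v, g x} \<in> E" by (rule aut)
    hence vgx: "{v, g x} \<in> E" using v by simp
    have "x \<in> V" using sg[OF \<open>{v,x}\<in>E\<close>] by blast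
    have "g x \<noteq> v" using ginj v \<open>x\<in>V\<close> f(2) by (metis inj_on_def)
    hence d: "distinct [v, x, g x]" using f(2) \<open>x \<noteq> v\<close> by auto
    have e1: "{x, g x} \<in> E" using f(1,3) by simp
    have e2: "{g x, v} \<in> E" using vgx by (simp add: insert_commute)
    show False using tri[OF assms(5) \<open>{v,x}\<in>E\<close> e1 e2 d] .
  qed
  have "card (\<Union>Fl \<union> (\<Union>v\<in>W. T v)) = 2 * card Fl + (4 * card V1 + 3 * card V2 + card V4)"
  proof -
    have "finite (\<Union>Fl)" using cardFl assms(1) finite_subset by blast
    moreover have "\<Union>(T ` W) \<subseteq> V" using TV by blast
    hence "finite (\<Union>(T ` W))" using assms(1) finite_subset by blast
    ultimately show ?thesis using card_Un_disjoint[OF _ _ disjFT] cardFl cardU sumW by simp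
  qed
  moreover have "card (\<Union>Fl \<union> (\<Union>v\<in>W. T v)) \<le> card V"
    by (rule card_mono[OF assms(1)]) (use cardFl TV in blast)
  ultimately show ?thesis unfolding Fl_def V1_def V2_def V4_def by simp
qed
end
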